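(* For every $\epsilon>0$ there is a randomized distributed algorithm in the CONGEST model which, on any directed graph with positive edge weights, outputs a directed cut whose expected weight is at least $(1/2-\epsilon)$ times the maximum directed cut weight, and runs in $O(\epsilon^{-1})$ communication rounds.
   Context: Weighted Max-DiCut: partition $V$ into $A,B$ (each vertex outputs its side) to maximize the total weight of edges directed from $A$ to $B$. CONGEST: the network is the underlying graph, synchronous rounds, $O(\log n)$-bit messages per edge per round. *)

theory Defs
  imports "HOL-Probability.Probability"
begin

text \<open>A weighted digraph on the finite vertex set V (vertex IDs are naturals).
  w u v > 0 means there is a directed edge u to v of (positive) weight w u v;
  w u v = 0 means there is no such edge.\<close>

definition wdigraph :: "nat set \<Rightarrow> (nat \<Rightarrow> nat \<Rightarrow> real) \<Rightarrow> bool" where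
  "wdigraph V w \<longleftrightarrow> finite V \<and> (\<forall>u v. 0 \<le> w u v) \<and>
     (\<forall>u v. w u v \<noteq> 0 \<longrightarrow> u \<in> V \<and> v \<in> V \<and> u \<noteq> v)"

definition dicut_weight :: "nat set \<Rightarrow> (nat \<Rightarrow> nat \<Rightarrow> real) \<Rightarrow> nat set \<Rightarrow> real" where
  "dicut_weight V w A = (\<Sum>u\<in>A. \<Sum>v\<in>V - A. w u v)"

definition max_dicut :: "nat set \<Rightarrow> (nat \<Rightarrow> nat \<Rightarrow> real) \<Rightarrow> real" where
  "max_dicut V w = Max (dicut_weight V w ` Pow V)"

text \<open>Neighbours in the underlying undirected graph (= communication network).\<close>
definition nbrs :: "nat set \<Rightarrow> (nat \<Rightarrow> nat \<Rightarrow> real) \<Rightarrow> nat \<Rightarrow> nat set" where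
  "nbrs V w v = {u \<in> V. 0 < w v u \<or> 0 < w u v}"

text \<open>Local input of a node: its ID, the number n of nodes, the weights of its
  outgoing edges, the weights of its incoming edges, and its private random bits.\<close>
type_synonym local_input = "nat \<times> nat \<times> (nat \<Rightarrow> real) \<times> (nat \<Rightarrow> real) \<times> bool list"

text \<open>A view: the local input together with the list of the messages received in
  each round so far (as a function from sender ID to message; [] for non-neighbours).\<close>
type_synonym view = "local_input \<times> (nat \<Rightarrow> bool list) list"

record congest_alg =
  rounds :: nat
  rand_bits :: "nat \<Rightarrow> nat"             \<comment> \<open>number of random bits per node, given n\<close>
  send :: "view \<Rightarrow> nat \<Rightarrow> bool list"    \<comment> \<open>message sent to the neighbour with given ID\<close>
  decide :: "view \<Rightarrow> bool"               \<comment> \<open>final output: True = side A, False = side B\<close>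

definition local_input :: "nat set \<Rightarrow> (nat \<Rightarrow> nat \<Rightarrow> real) \<Rightarrow> (nat \<Rightarrow> bool list) \<Rightarrow> nat \<Rightarrow> local_input" where
  "local_input V w r v = (v, card V, (\<lambda>u. w v u), (\<lambda>u. w u v), r v)"

primrec history :: "congest_alg \<Rightarrow> nat set \<Rightarrow> (nat \<Rightarrow> nat \<Rightarrow> real) \<Rightarrow> (nat \<Rightarrow> bool list)
    \<Rightarrow> nat \<Rightarrow> nat \<Rightarrow> (nat \<Rightarrow> bool list) list" where
  "history A V w r 0 = (\<lambda>v. [])"
| "history A V w r (Suc t) = (\<lambda>v. history A V w r t v @
     [(\<lambda>u. if u \<in> nbrs V w v then send A (local_input V w r u, history A V w r t u) v else [])])"

definition node_view :: "congest_alg \<Rightarrow> nat set \<Rightarrow> (nat \<Rightarrow> nat \<Rightarrow> real) \<Rightarrow> (nat \<Rightarrow> bool list)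
    \<Rightarrow> nat \<Rightarrow> nat \<Rightarrow> view" where
  "node_view A V w r t v = (local_input V w r v, history A V w r t v)"

definition output_cut :: "congest_alg \<Rightarrow> nat set \<Rightarrow> (nat \<Rightarrow> nat \<Rightarrow> real) \<Rightarrow> (nat \<Rightarrow> bool list) \<Rightarrow> nat set" where
  "output_cut A V w r = {v \<in> V. decide A (node_view A V w r (rounds A) v)}"

definition random_bits_pmf :: "congest_alg \<Rightarrow> nat set \<Rightarrow> (nat \<Rightarrow> bool list) pmf" where
  "random_bits_pmf A V = Pi_pmf V [] (\<lambda>_. pmf_of_set {xs. length xs = rand_bits A (card V)})"

definition admissible :: "nat \<Rightarrow> nat set \<Rightarrow> (nat \<Rightarrow> nat \<Rightarrow> real) \<Rightarrow> bool" where
  "admissible k V w \<longleftrightarrow> wdigraph V w \<and> V \<subseteq> {..< card V ^ k}"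

definition msg_bound :: "nat \<Rightarrow> nat \<Rightarrow> nat" where
  "msg_bound c n = c * (nat \<lceil>log 2 (real n)\<rceil> + 1)"

definition respects_bandwidth :: "nat \<Rightarrow> congest_alg \<Rightarrow> nat \<Rightarrow> bool" where
  "respects_bandwidth k A c \<longleftrightarrow>
     (\<forall>V w r t v u. admissible k V w \<longrightarrow> (\<forall>x\<in>V. length (r x) = rand_bits A (card V)) \<longrightarrow>
        t < rounds A \<longrightarrow> v \<in> V \<longrightarrow> u \<in> nbrs V w v \<longrightarrow>
        length (send A (node_view A V w r t v) u) \<le> msg_bound c (card V))"

end

theory Submission
  imports Defs
begin


fun hv :: "bool list \<Rightarrow> nat" where
  "hv [] = 0" | "hv (b # bs) = of_bool b + 2 * hv bs"

fun tob :: "nat \<Rightarrow> nat \<Rightarrow> bool list" where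
  "tob 0 k = []" | "tob (Suc m) k = odd k # tob m (k div 2)"

lemma hv_less: "hv xs < 2 ^ length xs"
  by (induction xs) auto

lemma length_tob: "length (tob m k) = m"
  by (induction m arbitrary: k) auto

lemma hv_tob: "k < 2 ^ m \<Longrightarrow> hv (tob m k) = k"
proof (induction m arbitrary: k)
  case (Suc m)
  then have "k div 2 < 2 ^ m" by auto
  with Suc show ?case by auto
qed auto

lemma tob_hv: "tob (length xs) (hv xs) = xs"
  by (induction xs) auto

lemma card_hv_less:
  assumes "j \<le> 2 ^ m"
  shows "card {xs. length xs = m \<and> hv xs < j} = j"
proof -
  have "bij_betw hv {xs. length xs = m \<and> hv xs < j} {..<j}"
    by (rule bij_betw_byWitness[where f' = "tob m"])
       (use assms in \<open>auto simp: tob_hv hv_tob length_tob\<close>)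
  then show ?thesis by (simp add: bij_betw_same_card)
qed

lemma card_len: "card {xs::bool list. length xs = m} = 2 ^ m"
  using card_lists_length_eq[of "UNIV::bool set" m] by simp

lemma finite_len: "finite {xs::bool list. length xs = m}"
  using finite_lists_length_eq[of "UNIV::bool set" m] by simp

lemma meas_hv:
  assumes "j \<le> 2 ^ m"
  shows "measure (pmf_of_set {xs::bool list. length xs = m}) {xs. hv xs < j} = real j / 2 ^ m"
proof -
  have ne: "{xs::bool list. length xs = m} \<noteq> {}" using length_tob by blast
  have "{xs::bool list. length xs = m} \<inter> {xs. hv xs < j} = {xs. length xs = m \<and> hv xs < j}" by auto
  then show ?thesis
    using card_hv_less[OF assms] card_len[of m] finite_len ne
    by (simp add: measure_pmf_of_set)
qed




lemma pmf_bounded_integrable: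
  fixes f :: "'a \<Rightarrow> real"
  assumes "\<And>x. \<bar>f x\<bar> \<le> B"
  shows "integrable (measure_pmf p) f"
  by (rule measure_pmf.integrable_const_bound[where B=B]) (use assms in auto)

lemma exp_pair:
  assumes fin: "finite V" and uv: "u \<in> V" "v \<in> V" "u \<noteq> v"
  shows "measure_pmf.expectation (Pi_pmf V d P) (\<lambda>r. of_bool (Q u (r u)) * of_bool (\<not> Q v (r v)))
       = measure (P u) {x. Q u x} * (1 - measure (P v) {x. Q v x})"
proof -
  define f where "f = (\<lambda>x y. if x = u then of_bool (Q u y) else if x = v then of_bool (\<not> Q v y) else (1::real))"
  have prod: "(\<Prod>x\<in>V. f x (r x)) = of_bool (Q u (r u)) * of_bool (\<not> Q v (r v))" for r
  proof -
    have "(\<Prod>x\<in>V. f x (r x)) = (\<Prod>x\<in>{u,v}. f x (r x))"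
      by (rule prod.mono_neutral_right) (use fin uv in \<open>auto simp: f_def\<close>)
    then show ?thesis using uv by (simp add: f_def)
  qed
  have "measure_pmf.expectation (Pi_pmf V d P) (\<lambda>r. \<Prod>x\<in>V. f x (r x)) =
        (\<Prod>x\<in>V. measure_pmf.expectation (P x) (\<lambda>y. f x y))"
    by (rule expectation_prod_Pi_pmf) (use fin in \<open>auto simp: f_def intro!: pmf_bounded_integrable[where B=1]\<close>)
  also have "\<dots> = (\<Prod>x\<in>{u,v}. measure_pmf.expectation (P x) (\<lambda>y. f x y))"
    by (rule prod.mono_neutral_right) (use fin uv in \<open>auto simp: f_def\<close>)
  also have "\<dots> = measure_pmf.expectation (P u) (\<lambda>y. of_bool (Q u y)) *
                  measure_pmf.expectation (P v) (\<lambda>y. of_bool (\<not> Q v y))"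
    using uv by (simp add: f_def)
  also have "measure_pmf.expectation (P u) (\<lambda>y. of_bool (Q u y)) = measure (P u) {x. Q u x}"
  proof -
    have "(\<lambda>y. of_bool (Q u y) :: real) = indicator {x. Q u x}" by (auto simp: indicator_def)
    then show ?thesis by simp
  qed
  also have "measure_pmf.expectation (P v) (\<lambda>y. of_bool (\<not> Q v y)) = 1 - measure (P v) {x. Q v x}"
  proof -
    have "(\<lambda>y. of_bool (\<not> Q v y) :: real) = indicator (- {x. Q v x})" by (auto simp: indicator_def)
    moreover have "measure (P v) (UNIV - {x. Q v x}) = 1 - measure (P v) {x. Q v x}"
      using measure_pmf.prob_compl[of "{x. Q v x}" "P v"] by simp
    ultimately show ?thesis by (simp add: Compl_eq_Diff_UNIV)
  qed
  finally show ?thesis using prod by simp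
qed

lemma dicut_as_sum:
  assumes "S \<subseteq> V" "finite V"
  shows "dicut_weight V w S = (\<Sum>u\<in>V. \<Sum>v\<in>V. w u v * of_bool (u \<in> S) * of_bool (v \<notin> S))"
proof -
  have "dicut_weight V w S = (\<Sum>u\<in>V. of_bool (u \<in> S) * (\<Sum>v\<in>V - S. w u v))"
  proof -
    have "(\<Sum>u\<in>V. of_bool (u \<in> S) * (\<Sum>v\<in>V - S. w u v)) = (\<Sum>u\<in>V. if u \<in> S then (\<Sum>v\<in>V - S. w u v) else 0)"
      by (rule sum.cong) auto
    also have "\<dots> = (\<Sum>u\<in>V \<inter> S. (\<Sum>v\<in>V - S. w u v))"
      using assms by (simp add: sum.inter_restrict)
    finally show ?thesis unfolding dicut_weight_def using assms by (simp add: inf.absorb1 Int_commute)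
  qed
  also have "\<dots> = (\<Sum>u\<in>V. \<Sum>v\<in>V. w u v * of_bool (u \<in> S) * of_bool (v \<notin> S))"
  proof (rule sum.cong[OF refl])
    fix u assume "u \<in> V"
    have "(\<Sum>v\<in>V. w u v * of_bool (v \<notin> S)) = (\<Sum>v\<in>V. if v \<in> -S then w u v else 0)"
      by (rule sum.cong) auto
    also have "\<dots> = (\<Sum>v\<in>V - S. w u v)"
      using assms by (simp add: sum.inter_restrict Diff_eq)
    finally have "(\<Sum>v\<in>V - S. w u v) = (\<Sum>v\<in>V. w u v * of_bool (v \<notin> S))" ..
    then show "of_bool (u \<in> S) * (\<Sum>v\<in>V - S. w u v) = (\<Sum>v\<in>V. w u v * of_bool (u \<in> S) * of_bool (v \<notin> S))"
      by (simp add: sum_distrib_left mult_ac)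
  qed
  finally show ?thesis .
qed

lemma exp_dicut:
  assumes fin: "finite V" and loop: "\<And>u. w u u = 0"
  shows "measure_pmf.expectation (Pi_pmf V d P) (\<lambda>r. dicut_weight V w {v\<in>V. Q v (r v)})
     = (\<Sum>u\<in>V. \<Sum>v\<in>V. w u v * measure (P u) {x. Q u x} * (1 - measure (P v) {x. Q v x}))"
proof -
  have "measure_pmf.expectation (Pi_pmf V d P) (\<lambda>r. dicut_weight V w {v\<in>V. Q v (r v)})
     = measure_pmf.expectation (Pi_pmf V d P) (\<lambda>r. \<Sum>u\<in>V. \<Sum>v\<in>V. w u v * (of_bool (Q u (r u)) * of_bool (\<not> Q v (r v))))"
    by (subst dicut_as_sum) (use fin in \<open>auto simp: mult_ac intro!: sum.cong arg_cong[where f="measure_pmf.expectation _"] ext\<close>)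
  also have "\<dots> = (\<Sum>u\<in>V. \<Sum>v\<in>V. w u v * measure_pmf.expectation (Pi_pmf V d P) (\<lambda>r. of_bool (Q u (r u)) * of_bool (\<not> Q v (r v))))"
  proof -
    have i1: "integrable (measure_pmf (Pi_pmf V d P)) (\<lambda>r. w u v * (of_bool (Q u (r u)) * of_bool (\<not> Q v (r v))))" for u v
      by (rule pmf_bounded_integrable[where B="\<bar>w u v\<bar>"]) auto
    have i2: "integrable (measure_pmf (Pi_pmf V d P)) (\<lambda>r. \<Sum>v\<in>V. w u v * (of_bool (Q u (r u)) * of_bool (\<not> Q v (r v))))" for u
      by (rule Bochner_Integration.integrable_sum) (rule i1)
    show ?thesis
      by (simp add: Bochner_Integration.integral_sum[OF i2] Bochner_Integration.integral_sum[OF i1])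
  qed
  also have "\<dots> = (\<Sum>u\<in>V. \<Sum>v\<in>V. w u v * measure (P u) {x. Q u x} * (1 - measure (P v) {x. Q v x}))"
  proof (intro sum.cong refl)
    fix u v assume uv: "u \<in> V" "v \<in> V"
    show "w u v * measure_pmf.expectation (Pi_pmf V d P) (\<lambda>r. of_bool (Q u (r u)) * of_bool (\<not> Q v (r v)))
        = w u v * measure (P u) {x. Q u x} * (1 - measure (P v) {x. Q v x})"
    proof (cases "u = v")
      case True then show ?thesis using loop by simp
    next
      case False then show ?thesis using exp_pair[OF fin uv False, of d P Q] by (simp add: mult.assoc)
    qed
  qed
  finally show ?thesis .
qed




lemma dicut_bound:
  assumes "finite V" "S \<subseteq> V"
  shows "\<bar>dicut_weight V w S\<bar> \<le> (\<Sum>u\<in>V. \<Sum>v\<in>V. \<bar>w u v\<bar>)"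
proof -
  have "\<bar>dicut_weight V w S\<bar> \<le> (\<Sum>u\<in>S. \<bar>\<Sum>v\<in>V - S. w u v\<bar>)"
    unfolding dicut_weight_def by (rule sum_abs)
  also have "\<dots> \<le> (\<Sum>u\<in>S. \<Sum>v\<in>V - S. \<bar>w u v\<bar>)"
    by (intro sum_mono sum_abs)
  also have "\<dots> \<le> (\<Sum>u\<in>S. \<Sum>v\<in>V. \<bar>w u v\<bar>)"
    by (intro sum_mono sum_mono2) (use assms in auto)
  also have "\<dots> \<le> (\<Sum>u\<in>V. \<Sum>v\<in>V. \<bar>w u v\<bar>)"
    by (intro sum_mono2) (use assms in \<open>auto intro: sum_nonneg\<close>)
  finally show ?thesis .
qed

lemma dicut_le_max:
  assumes "finite V" "S \<subseteq> V"
  shows "dicut_weight V w S \<le> max_dicut V w"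
  unfolding max_dicut_def using assms by (intro Max_ge) auto

lemma max_attained:
  assumes "finite V"
  obtains S where "S \<subseteq> V" "max_dicut V w = dicut_weight V w S"
proof -
  have "max_dicut V w \<in> dicut_weight V w ` Pow V"
    unfolding max_dicut_def using assms by (intro Max_in) auto
  then show ?thesis using that by auto
qed

lemma max_nonneg:
  assumes "finite V" "\<And>u v. 0 \<le> w u v"
  shows "0 \<le> max_dicut V w"
proof -
  have "dicut_weight V w {} \<le> max_dicut V w" by (rule dicut_le_max) (use assms in auto)
  then show ?thesis by (simp add: dicut_weight_def)
qed

lemma W_le:
  assumes fin: "finite V" and loop: "\<And>u. w u u = 0"
  shows "(\<Sum>u\<in>V. \<Sum>v\<in>V. w u v) \<le> 4 * max_dicut V w"
proof -
  let ?p = "Pi_pmf V False (\<lambda>_. bernoulli_pmf (1/2))"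
  have m: "measure (bernoulli_pmf (1/2)) {x. x} = 1/2"
  proof -
    have "{x::bool. x} = {True}" by auto
    then show ?thesis by (simp add: measure_pmf_single)
  qed
  have "measure_pmf.expectation ?p (\<lambda>r. dicut_weight V w {v\<in>V. r v})
        = (\<Sum>u\<in>V. \<Sum>v\<in>V. w u v * (1/2) * (1 - 1/2))"
    using exp_dicut[where V=V and w=w and d=False and P="\<lambda>_. bernoulli_pmf (1/2)" and Q="\<lambda>_ x. x", OF fin loop] m by simp
  also have "\<dots> = (\<Sum>u\<in>V. \<Sum>v\<in>V. w u v) / 4"
    by (simp add: sum_divide_distrib)
  finally have e: "measure_pmf.expectation ?p (\<lambda>r. dicut_weight V w {v\<in>V. r v}) = (\<Sum>u\<in>V. \<Sum>v\<in>V. w u v) / 4" .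
  have "measure_pmf.expectation ?p (\<lambda>r. dicut_weight V w {v\<in>V. r v}) \<le> max_dicut V w"
  proof (rule measure_pmf.integral_le_const)
    show "integrable (measure_pmf ?p) (\<lambda>r. dicut_weight V w {v\<in>V. r v})"
      by (rule pmf_bounded_integrable[where B="\<Sum>u\<in>V. \<Sum>v\<in>V. \<bar>w u v\<bar>"])
         (rule dicut_bound, use fin in auto)
    show "AE x in measure_pmf ?p. dicut_weight V w {v\<in>V. x v} \<le> max_dicut V w"
      by (rule AE_pmfI) (rule dicut_le_max, use fin in auto)
  qed
  with e show ?thesis by simp
qed



lemma lin_aux: "2 * X - G = A + B \<Longrightarrow> A \<le> 0 \<Longrightarrow> B \<le> 4 * E \<Longrightarrow> X \<le> G / 2 + 2 * (E::real)"
  by linarith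

lemma vtx_ab:
  fixes a b p \<theta> M :: real
  assumes a: "a > 0" and b: "b > 0" and th: "0 \<le> \<theta>" "\<theta> * M \<le> 1" and M: "M > 0"
    and p: "p = a / (a + b) - \<theta>"
  shows "(1 - p) * a \<le> (p * a + (1 - p) * b) / 2 + 2 * ((a + b) / M)"
    and "p * b \<le> (p * a + (1 - p) * b) / 2 + 2 * ((a + b) / M)"
proof -
  have s: "a + b > 0" using a b by simp
  define q where "q = a / (a + b)"
  have qs: "q * (a + b) = a" using s by (simp add: q_def)
  have p': "p = q - \<theta>" using p q_def by simp
  have e1': "2 * ((1 - p) * a) - (p * a + (1 - p) * b) = (2 * a - b - q * (3 * a - b)) + \<theta> * (3 * a - b)"
    unfolding p' by (simp add: algebra_simps)
  have e2': "2 * (p * b) - (p * a + (1 - p) * b) = (q * (3 * b - a) - b) + \<theta> * (a - 3 * b)"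
    unfolding p' by (simp add: algebra_simps)
  have f1: "(2 * a - b - q * (3 * a - b)) * (a + b) = - ((a - b) * (a - b))"
  proof -
    have "(2 * a - b - q * (3 * a - b)) * (a + b) = (2*a-b)*(a+b) - (3*a-b)*(q*(a+b))" by (simp add: algebra_simps)
    also have "\<dots> = (2*a-b)*(a+b) - (3*a-b)*a" by (simp add: qs)
    also have "\<dots> = - ((a - b) * (a - b))" by (simp add: algebra_simps)
    finally show ?thesis .
  qed
  have f2: "(q * (3 * b - a) - b) * (a + b) = - ((a - b) * (a - b))"
  proof -
    have "(q * (3 * b - a) - b) * (a + b) = (3*b-a)*(q*(a+b)) - b*(a+b)" by (simp add: algebra_simps)
    also have "\<dots> = (3*b-a)*a - b*(a+b)" by (simp add: qs)
    also have "\<dots> = - ((a - b) * (a - b))" by (simp add: algebra_simps)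
    finally show ?thesis .
  qed
  have g1: "2 * a - b - q * (3 * a - b) \<le> 0"
  proof (rule ccontr)
    assume "\<not> ?thesis"
    then have "(2 * a - b - q * (3 * a - b)) * (a + b) > 0" using s by simp
    then show False using f1 by (simp add: mult_nonneg_nonneg)
  qed
  have g2: "q * (3 * b - a) - b \<le> 0"
  proof (rule ccontr)
    assume "\<not> ?thesis"
    then have "(q * (3 * b - a) - b) * (a + b) > 0" using s by simp
    then show False using f2 by (simp add: mult_nonneg_nonneg)
  qed
  have t0: "\<theta> * M * (a + b) \<le> 1 * (a + b)" by (rule mult_right_mono) (use th s in auto)
  have t: "\<theta> * (a + b) \<le> (a + b) / M" using t0 M by (simp add: pos_le_divide_eq mult_ac)
  have pos: "(a + b) / M \<ge> 0" using s M by simp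
  have "\<theta> * (3 * a - b) \<le> \<theta> * (3 * (a + b))" by (rule mult_left_mono) (use th a b in auto)
  then have t1: "\<theta> * (3 * a - b) \<le> 4 * ((a + b) / M)"
    using t pos mult.assoc[of \<theta> 3 "a+b"] mult.commute[of \<theta> 3] by linarith
  have "\<theta> * (a - 3 * b) \<le> \<theta> * (3 * (a + b))" by (rule mult_left_mono) (use th a b in auto)
  then have t2: "\<theta> * (a - 3 * b) \<le> 4 * ((a + b) / M)"
    using t pos mult.assoc[of \<theta> 3 "a+b"] mult.commute[of \<theta> 3] by linarith
  show "(1 - p) * a \<le> (p * a + (1 - p) * b) / 2 + 2 * ((a + b) / M)" by (rule lin_aux[OF e1' g1 t1])
  show "p * b \<le> (p * a + (1 - p) * b) / 2 + 2 * ((a + b) / M)" by (rule lin_aux[OF e2' g2 t2])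
qed



definition qch :: "nat \<Rightarrow> real \<Rightarrow> real \<Rightarrow> nat" where
  "qch M a b = (if a \<le> 0 then 0 else if b \<le> 0 then M else nat \<lfloor>real M * a / (a + b)\<rfloor>)"

lemma qch_le: "qch M a b \<le> M"
proof -
  have "a > 0 \<Longrightarrow> b > 0 \<Longrightarrow> nat \<lfloor>real M * a / (a + b)\<rfloor> \<le> M"
  proof -
    assume "a > 0" "b > 0"
    then have "real M * a / (a + b) \<le> real M"
      by (simp add: divide_le_eq mult_left_mono)
    then have "\<lfloor>real M * a / (a + b)\<rfloor> \<le> int M" by linarith
    then show ?thesis by simp
  qed
  then show ?thesis unfolding qch_def by auto
qed

lemma vtx:
  fixes a b p :: real and M :: nat and ob :: bool
  assumes M: "M > 0" and ab: "a + b \<ge> 0" and p: "p = real (qch M a b) / real M"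
  shows "(if ob then (1 - p) * a else p * b) \<le> (p * a + (1 - p) * b) / 2 + 2 * ((\<bar>a\<bar> + \<bar>b\<bar>) / M)"
proof -
  have E: "0 \<le> (\<bar>a\<bar> + \<bar>b\<bar>) / M" by simp
  consider "a \<le> 0" | "a > 0" "b \<le> 0" | "a > 0" "b > 0" by linarith
  then show ?thesis
  proof cases
    case 1
    then have "p = 0" using p by (simp add: qch_def)
    have g: "(if ob then (1 - p) * a else p * b) \<le> 0" using \<open>p = 0\<close> 1 by simp
    have "0 \<le> (p * a + (1 - p) * b) / 2" using \<open>p = 0\<close> 1 ab by simp
    then show ?thesis using g E by linarith
  next
    case 2
    then have "p = 1" using p M by (simp add: qch_def)
    have g: "(if ob then (1 - p) * a else p * b) \<le> 0" using \<open>p = 1\<close> 2 by simp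
    have "0 \<le> (p * a + (1 - p) * b) / 2" using \<open>p = 1\<close> 2 ab by simp
    then show ?thesis using g E by linarith
  next
    case 3
    define x where "x = real M * a / (a + b)"
    have x0: "x \<ge> 0" using 3 by (simp add: x_def)
    have k: "qch M a b = nat \<lfloor>x\<rfloor>" using 3 by (simp add: qch_def x_def)
    have fl: "real (nat \<lfloor>x\<rfloor>) \<le> x" "x < real (nat \<lfloor>x\<rfloor>) + 1" using x0 by linarith+
    define \<theta> where "\<theta> = a / (a + b) - p"
    have Mr: "real M > 0" using M by simp
    have px: "p = real (nat \<lfloor>x\<rfloor>) / real M" using p k by simp
    have ax: "a / (a + b) = x / real M" using Mr by (simp add: x_def)
    have th0: "0 \<le> \<theta>" unfolding \<theta>_def ax px using fl Mr by (simp add: divide_right_mono)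
    have "\<theta> * real M = x - real (nat \<lfloor>x\<rfloor>)" unfolding \<theta>_def ax px using Mr by (simp add: field_simps)
    then have th1: "\<theta> * real M \<le> 1" using fl by linarith
    have pp: "p = a / (a + b) - \<theta>" by (simp add: \<theta>_def)
    have abs: "\<bar>a\<bar> + \<bar>b\<bar> = a + b" using 3 by simp
    show ?thesis using vtx_ab[OF 3 th0 th1 Mr pp] abs by auto
  qed
qed




definition FF :: "nat set \<Rightarrow> (nat \<Rightarrow> nat \<Rightarrow> real) \<Rightarrow> (nat \<Rightarrow> real) \<Rightarrow> real" where
  "FF V w X = (\<Sum>u\<in>V. \<Sum>v\<in>V. w u v * X u * (1 - X v))"
definition DD :: "nat set \<Rightarrow> (nat \<Rightarrow> nat \<Rightarrow> real) \<Rightarrow> (nat \<Rightarrow> real) \<Rightarrow> nat \<Rightarrow> real" where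
  "DD V w X v = (\<Sum>u\<in>V. w v u * (1 - X u) - w u v * X u)"
definition QQ :: "nat set \<Rightarrow> (nat \<Rightarrow> nat \<Rightarrow> real) \<Rightarrow> (nat \<Rightarrow> real) \<Rightarrow> real" where
  "QQ V w D = (\<Sum>u\<in>V. \<Sum>v\<in>V. w u v * D u * D v)"
definition WW :: "nat set \<Rightarrow> (nat \<Rightarrow> nat \<Rightarrow> real) \<Rightarrow> real" where
  "WW V w = (\<Sum>u\<in>V. \<Sum>v\<in>V. w u v)"

lemma FF_add:
  "FF V w (\<lambda>u. X u + D u) = FF V w X + (\<Sum>v\<in>V. D v * DD V w X v) - QQ V w D"
proof -
  have A: "(\<Sum>v\<in>V. D v * DD V w X v) =
      (\<Sum>u\<in>V. \<Sum>v\<in>V. D u * w u v * (1 - X v)) - (\<Sum>u\<in>V. \<Sum>v\<in>V. D v * w u v * X u)"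
  proof -
    have "(\<Sum>v\<in>V. D v * DD V w X v) =
      (\<Sum>v\<in>V. \<Sum>u\<in>V. D v * w v u * (1 - X u)) - (\<Sum>v\<in>V. \<Sum>u\<in>V. D v * w u v * X u)"
    proof -
      have "(\<Sum>v\<in>V. D v * DD V w X v) = (\<Sum>v\<in>V. \<Sum>u\<in>V. D v * (w v u * (1 - X u)) - D v * (w u v * X u))"
        unfolding DD_def by (simp add: sum_distrib_left right_diff_distrib)
      also have "\<dots> = (\<Sum>v\<in>V. \<Sum>u\<in>V. D v * w v u * (1 - X u)) - (\<Sum>v\<in>V. \<Sum>u\<in>V. D v * w u v * X u)"
        by (simp only: sum_subtractf mult.assoc)
      finally show ?thesis .
    qed
    also have "(\<Sum>v\<in>V. \<Sum>u\<in>V. D v * w u v * X u) = (\<Sum>u\<in>V. \<Sum>v\<in>V. D v * w u v * X u)"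
      by (rule sum.swap)
    finally show ?thesis .
  qed
  have "FF V w (\<lambda>u. X u + D u) = (\<Sum>u\<in>V. \<Sum>v\<in>V. (w u v * X u * (1 - X v) + D u * w u v * (1 - X v)) - (D v * w u v * X u + w u v * D u * D v))"
    unfolding FF_def by (intro sum.cong refl) (simp add: algebra_simps)
  also have "\<dots> = FF V w X + (\<Sum>u\<in>V. \<Sum>v\<in>V. D u * w u v * (1 - X v)) - ((\<Sum>u\<in>V. \<Sum>v\<in>V. D v * w u v * X u) + QQ V w D)"
    unfolding FF_def QQ_def by (simp add: sum.distrib sum_subtractf)
  finally show ?thesis using A by simp
qed

lemma DD_mono:
  assumes nn: "\<And>u v. 0 \<le> w u v" and le: "\<And>u. u \<in> V \<Longrightarrow> X u \<le> Z u"
  shows "DD V w Z v \<le> DD V w X v"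
  unfolding DD_def
proof (rule sum_mono)
  fix u assume "u \<in> V"
  then have "w v u * (1 - Z u) \<le> w v u * (1 - X u)" "w u v * X u \<le> w u v * Z u"
    using le nn by (auto intro: mult_left_mono)
  then show "w v u * (1 - Z u) - w u v * Z u \<le> w v u * (1 - X u) - w u v * X u" by linarith
qed

lemma DD_bound:
  assumes nn: "\<And>u v. 0 \<le> w u v" and b: "\<And>u. u \<in> V \<Longrightarrow> 0 \<le> X u \<and> X u \<le> 1"
  shows "\<bar>DD V w X v\<bar> \<le> (\<Sum>u\<in>V. w v u + w u v)"
  unfolding DD_def
proof -
  have "\<bar>\<Sum>u\<in>V. w v u * (1 - X u) - w u v * X u\<bar> \<le> (\<Sum>u\<in>V. \<bar>w v u * (1 - X u) - w u v * X u\<bar>)"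
    by (rule sum_abs)
  also have "\<dots> \<le> (\<Sum>u\<in>V. w v u + w u v)"
  proof (rule sum_mono)
    fix u assume u: "u \<in> V"
    have "0 \<le> w v u * (1 - X u)" "w v u * (1 - X u) \<le> w v u"
      "0 \<le> w u v * X u" "w u v * X u \<le> w u v"
      using b[OF u] nn by (auto intro: mult_nonneg_nonneg mult_left_le)
    then show "\<bar>w v u * (1 - X u) - w u v * X u\<bar> \<le> w v u + w u v" by linarith
  qed
  finally show "\<bar>\<Sum>u\<in>V. w v u * (1 - X u) - w u v * X u\<bar> \<le> (\<Sum>u\<in>V. w v u + w u v)" .
qed

lemma QQ_bound:
  assumes nn: "\<And>u v. 0 \<le> w u v" and b: "\<And>u. u \<in> V \<Longrightarrow> \<bar>D u\<bar> \<le> c"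
  shows "\<bar>QQ V w D\<bar> \<le> c * c * WW V w"
proof -
  have "\<bar>QQ V w D\<bar> \<le> (\<Sum>u\<in>V. \<bar>\<Sum>v\<in>V. w u v * D u * D v\<bar>)"
    unfolding QQ_def by (rule sum_abs)
  also have "\<dots> \<le> (\<Sum>u\<in>V. \<Sum>v\<in>V. \<bar>w u v * D u * D v\<bar>)"
    by (intro sum_mono sum_abs)
  also have "\<dots> \<le> (\<Sum>u\<in>V. \<Sum>v\<in>V. c * c * w u v)"
  proof (intro sum_mono)
    fix u v assume uv: "u \<in> V" "v \<in> V"
    have "\<bar>D u\<bar> * \<bar>D v\<bar> \<le> c * c" using b[OF uv(1)] b[OF uv(2)]
      by (intro mult_mono) auto
    then have "w u v * (\<bar>D u\<bar> * \<bar>D v\<bar>) \<le> w u v * (c * c)" using nn by (intro mult_left_mono) auto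
    then show "\<bar>w u v * D u * D v\<bar> \<le> c * c * w u v"
      using nn[of u v] by (simp add: abs_mult mult_ac)
  qed
  also have "\<dots> = c * c * WW V w" unfolding WW_def by (simp add: sum_distrib_left)
  finally show ?thesis .
qed

lemma deg_sum: "(\<Sum>v\<in>V. \<Sum>u\<in>V. w v u + w u v) = 2 * WW V w"
proof -
  have "(\<Sum>v\<in>V. \<Sum>u\<in>V. w v u + w u v) = (\<Sum>v\<in>V. \<Sum>u\<in>V. w v u) + (\<Sum>v\<in>V. \<Sum>u\<in>V. w u v)"
    by (simp add: sum.distrib)
  also have "(\<Sum>v\<in>V. \<Sum>u\<in>V. w u v) = (\<Sum>u\<in>V. \<Sum>v\<in>V. w u v)" by (rule sum.swap)
  finally show ?thesis unfolding WW_def by simp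
qed




lemma lin2: "(A::real) \<le> X + e \<Longrightarrow> B \<le> Y + e \<Longrightarrow> Zd \<le> L + e \<Longrightarrow> L \<le> (A + B) / 2 + f
  \<Longrightarrow> Zd \<le> (X + Y) / 2 + 2 * e + f"
  by (simp add: field_simps)

lemma step:
  fixes V w x y p \<delta> M Ob
  assumes fin: "finite V" and nn: "\<And>u v. 0 \<le> w u v" and M: "M > 0" and \<delta>: "0 \<le> \<delta>"
    and xy: "\<And>u. 0 \<le> x u \<and> x u \<le> y u \<and> y u \<le> 1"
    and p: "\<And>u. p u = real (qch M (DD V w x u) (- DD V w y u)) / real M"
  shows "FF V w (\<lambda>u. if u \<in> Ob then y u else x u) - FF V w (\<lambda>u. if u \<in> Ob then y u - \<delta> * (1 - p u) else x u + \<delta> * p u)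
     \<le> ((FF V w (\<lambda>u. x u + \<delta> * p u) - FF V w x) + (FF V w (\<lambda>u. y u - \<delta> * (1 - p u)) - FF V w y)) / 2
        + 2 * (\<delta> * \<delta> * WW V w) + 8 * (\<delta> * (WW V w / M))"
proof -
  define W where "W = WW V w"
  define a where "a u = DD V w x u" for u
  define b where "b u = - DD V w y u" for u
  define z where "z = (\<lambda>u. if u \<in> Ob then y u else x u)"
  define dz where "dz = (\<lambda>u. if u \<in> Ob then - (\<delta> * (1 - p u)) else \<delta> * p u)"
  define loss where "loss u = (if u \<in> Ob then (1 - p u) * a u else p u * b u)" for u
  define d where "d v = (\<Sum>u\<in>V. w v u + w u v)" for v
  have Mr: "real M > 0" using M by simp
  have p01: "0 \<le> p u \<and> p u \<le> 1" for u
    using p[of u] qch_le[of M] Mr by (simp add: divide_le_eq)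
  have Wnn: "0 \<le> W" unfolding W_def WW_def by (intro sum_nonneg) (simp add: nn)
  have Mdiv: "W / M \<ge> 0" using Wnn by simp
  define SA where "SA = (\<Sum>v\<in>V. p v * a v)"
  have "\<bar>QQ V w (\<lambda>u. \<delta> * p u)\<bar> \<le> \<delta> * \<delta> * W"
    unfolding W_def by (rule QQ_bound[OF nn]) (use p01 \<delta> in \<open>auto simp: abs_mult intro: mult_left_le\<close>)
  moreover have "FF V w (\<lambda>u. x u + \<delta> * p u) = FF V w x + \<delta> * SA - QQ V w (\<lambda>u. \<delta> * p u)"
    unfolding FF_add SA_def a_def by (simp add: sum_distrib_left mult_ac)
  ultimately have X1: "\<delta> * SA \<le> (FF V w (\<lambda>u. x u + \<delta> * p u) - FF V w x) + \<delta> * \<delta> * W" by linarith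
  define SB where "SB = (\<Sum>v\<in>V. (1 - p v) * b v)"
  have "\<bar>QQ V w (\<lambda>u. - (\<delta> * (1 - p u)))\<bar> \<le> \<delta> * \<delta> * W"
    unfolding W_def by (rule QQ_bound[OF nn]) (use p01 \<delta> in \<open>auto simp: abs_mult intro: mult_left_le\<close>)
  moreover have "FF V w (\<lambda>u. y u - \<delta> * (1 - p u)) = FF V w y + \<delta> * SB - QQ V w (\<lambda>u. - (\<delta> * (1 - p u)))"
  proof -
    have "FF V w (\<lambda>u. y u - \<delta> * (1 - p u)) = FF V w (\<lambda>u. y u + - (\<delta> * (1 - p u)))" by simp
    also have "\<dots> = FF V w y + (\<Sum>v\<in>V. - (\<delta> * (1 - p v)) * DD V w y v) - QQ V w (\<lambda>u. - (\<delta> * (1 - p u)))"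
      by (rule FF_add)
    also have "(\<Sum>v\<in>V. - (\<delta> * (1 - p v)) * DD V w y v) = \<delta> * SB"
      unfolding SB_def b_def by (simp add: sum_distrib_left mult_ac)
    finally show ?thesis .
  qed
  ultimately have Y1: "\<delta> * SB \<le> (FF V w (\<lambda>u. y u - \<delta> * (1 - p u)) - FF V w y) + \<delta> * \<delta> * W" by linarith
  define SL where "SL = (\<Sum>v\<in>V. loss v)"
  have zz: "(\<lambda>u. if u \<in> Ob then y u - \<delta> * (1 - p u) else x u + \<delta> * p u) = (\<lambda>u. z u + dz u)"
    by (auto simp: z_def dz_def)
  have "\<bar>QQ V w dz\<bar> \<le> \<delta> * \<delta> * W"
    unfolding W_def by (rule QQ_bound[OF nn]) (use p01 \<delta> in \<open>auto simp: dz_def abs_mult intro: mult_left_le\<close>)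
  moreover have "FF V w (\<lambda>u. z u + dz u) = FF V w z + (\<Sum>v\<in>V. dz v * DD V w z v) - QQ V w dz"
    by (rule FF_add)
  moreover have "- (\<Sum>v\<in>V. dz v * DD V w z v) \<le> \<delta> * SL"
  proof -
    have "- (dz v * DD V w z v) \<le> \<delta> * loss v" for v
    proof (cases "v \<in> Ob")
      case True
      have "DD V w z v \<le> DD V w x v" by (rule DD_mono[OF nn]) (use xy in \<open>auto simp: z_def\<close>)
      then have "\<delta> * (1 - p v) * DD V w z v \<le> \<delta> * (1 - p v) * DD V w x v"
        using p01[of v] \<delta> by (intro mult_left_mono) auto
      then show ?thesis using True by (simp add: dz_def loss_def a_def mult_ac)
    next
      case False
      have "DD V w y v \<le> DD V w z v" by (rule DD_mono[OF nn]) (use xy in \<open>auto simp: z_def\<close>)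
      then have "\<delta> * p v * DD V w y v \<le> \<delta> * p v * DD V w z v"
        using p01[of v] \<delta> by (intro mult_left_mono) auto
      then show ?thesis using False by (simp add: dz_def loss_def b_def mult_ac)
    qed
    then have "(\<Sum>v\<in>V. - (dz v * DD V w z v)) \<le> (\<Sum>v\<in>V. \<delta> * loss v)" by (intro sum_mono)
    then show ?thesis by (simp add: SL_def sum_distrib_left sum_negf)
  qed
  ultimately have Z1: "FF V w z - FF V w (\<lambda>u. z u + dz u) \<le> \<delta> * SL + \<delta> * \<delta> * W" by linarith
  define SE where "SE = (\<Sum>v\<in>V. \<bar>a v\<bar> + \<bar>b v\<bar>)"
  have L: "SL \<le> (SA + SB) / 2 + 2 * (SE / M)"
  proof -
    have "loss v \<le> (p v * a v + (1 - p v) * b v) / 2 + 2 * ((\<bar>a v\<bar> + \<bar>b v\<bar>) / M)" for v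
    proof -
      have "DD V w y v \<le> DD V w x v" by (rule DD_mono[OF nn]) (use xy in auto)
      then have ab: "a v + b v \<ge> 0" by (simp add: a_def b_def)
      show ?thesis unfolding loss_def by (rule vtx[OF M ab]) (simp add: p a_def b_def)
    qed
    then have "SL \<le> (\<Sum>v\<in>V. (p v * a v + (1 - p v) * b v) / 2 + 2 * ((\<bar>a v\<bar> + \<bar>b v\<bar>) / M))"
      unfolding SL_def by (intro sum_mono)
    also have "\<dots> = (\<Sum>v\<in>V. (p v * a v + (1 - p v) * b v) / 2) + (\<Sum>v\<in>V. 2 * ((\<bar>a v\<bar> + \<bar>b v\<bar>) / M))"
      by (rule sum.distrib)
    also have "\<dots> = (\<Sum>v\<in>V. p v * a v + (1 - p v) * b v) / 2 + 2 * ((\<Sum>v\<in>V. \<bar>a v\<bar> + \<bar>b v\<bar>) / M)"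
      by (simp only: sum_divide_distrib[symmetric] sum_distrib_left[symmetric])
    also have "\<dots> = (SA + SB) / 2 + 2 * (SE / M)"
      unfolding SA_def SB_def SE_def by (simp only: sum.distrib)
    finally show ?thesis .
  qed
  have SE: "SE \<le> 4 * W"
  proof -
    have "\<bar>a v\<bar> + \<bar>b v\<bar> \<le> 2 * d v" for v
    proof -
      have "\<bar>a v\<bar> \<le> d v" unfolding a_def d_def by (rule DD_bound[OF nn]) (use xy in \<open>auto intro: order_trans\<close>)
      moreover have "\<bar>b v\<bar> \<le> d v" unfolding b_def d_def using DD_bound[where V=V and X=y and v=v and w=w, OF nn] xy
        by (auto intro: order_trans)
      ultimately show ?thesis by linarith
    qed
    then have "SE \<le> (\<Sum>v\<in>V. 2 * d v)" unfolding SE_def by (intro sum_mono)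
    also have "\<dots> = 2 * (2 * W)" unfolding d_def W_def by (simp add: sum_distrib_left[symmetric] deg_sum)
    finally show ?thesis by simp
  qed
  have "SE / M \<le> 4 * (W / M)" using SE Mr by (simp add: divide_right_mono)
  then have "SL \<le> (SA + SB) / 2 + 8 * (W / M)" using L by linarith
  then have "\<delta> * SL \<le> \<delta> * ((SA + SB) / 2 + 8 * (W / M))" using \<delta> by (rule mult_left_mono)
  then have L2: "\<delta> * SL \<le> (\<delta> * SA + \<delta> * SB) / 2 + 8 * (\<delta> * (W / M))"
    by (simp add: algebra_simps)
  show ?thesis
    unfolding zz W_def[symmetric] z_def[symmetric]
    by (rule lin2[OF X1 Y1 Z1 L2])
qed




lemma lin4: "(Za::real) - Zb \<le> ((Xb - Xa) + (Yb - Ya)) / 2 + A + B \<Longrightarrow>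
   (Za + (Xa + Ya) / 2) - (Zb + (Xb + Yb) / 2) \<le> A + B"
  by (simp add: field_simps)

lemma process:
  fixes V w x T M Ob
  assumes fin: "finite V" and nn: "\<And>u v. 0 \<le> w u v" and T: "T > 0" and M: "M > 0"
    and x0: "\<And>u. x 0 u = 0"
    and xs: "\<And>t u. x (Suc t) u = x t u + real (qch M (DD V w (x t) u) (- DD V w (\<lambda>u. x t u + (1 - real t / real T)) u)) / (real T * real M)"
  shows "FF V w (\<lambda>u. of_bool (u \<in> Ob)) - 2 * FF V w (x T) \<le> 2 * (WW V w / T) + 8 * (WW V w / M)"
proof -
  define \<delta> where "\<delta> = 1 / real T"
  define y where "y t u = x t u + (1 - real t / real T)" for t u
  define p where "p t u = real (qch M (DD V w (x t) u) (- DD V w (y t) u)) / real M" for t u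
  define z where "z t u = (if u \<in> Ob then y t u else x t u)" for t u
  define \<Phi> where "\<Phi> t = FF V w (z t) + (FF V w (x t) + FF V w (y t)) / 2" for t
  define E where "E = 2 * (\<delta> * \<delta> * WW V w) + 8 * (\<delta> * (WW V w / M))"
  have Tr: "real T > 0" using T by simp
  have Mr: "real M > 0" using M by simp
  have \<delta>0: "0 \<le> \<delta>" by (simp add: \<delta>_def)
  have yfun: "(\<lambda>u. x t u + (1 - real t / real T)) = y t" for t by (simp add: y_def fun_eq_iff)
  have p01: "0 \<le> p t u \<and> p t u \<le> 1" for t u
    using qch_le[of M] Mr unfolding p_def by (simp add: divide_le_eq)
  have xs': "x (Suc t) u = x t u + \<delta> * p t u" for t u
    using xs[of t u] unfolding yfun p_def \<delta>_def by (simp add: field_simps)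
  have xb: "0 \<le> x t u \<and> x t u \<le> real t / real T" for t u
  proof (induction t)
    case 0 then show ?case using x0 by simp
  next
    case (Suc t)
    have "\<delta> * p t u \<le> \<delta>" using p01[of t u] \<delta>0 by (simp add: mult_left_le)
    moreover have "0 \<le> \<delta> * p t u" using p01[of t u] \<delta>0 by simp
    moreover have "real (Suc t) / real T = real t / real T + \<delta>" by (simp add: \<delta>_def add_divide_distrib)
    ultimately show ?case using Suc xs'[of t u] by linarith
  qed
  have ys: "y (Suc t) u = y t u - \<delta> * (1 - p t u)" for t u
    unfolding y_def xs' by (simp add: \<delta>_def add_divide_distrib algebra_simps)
  have stepE: "\<Phi> t - \<Phi> (Suc t) \<le> E" if tT: "t < T" for t
  proof -
    have tle: "real t / real T \<le> 1" using tT Tr by (simp add: divide_le_eq)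
    have xy: "0 \<le> x t u \<and> x t u \<le> y t u \<and> y t u \<le> 1" for u
      using xb[of t u] tle unfolding y_def by simp
    have S: "FF V w (\<lambda>u. if u \<in> Ob then y t u else x t u) - FF V w (\<lambda>u. if u \<in> Ob then y t u - \<delta> * (1 - p t u) else x t u + \<delta> * p t u)
     \<le> ((FF V w (\<lambda>u. x t u + \<delta> * p t u) - FF V w (x t)) + (FF V w (\<lambda>u. y t u - \<delta> * (1 - p t u)) - FF V w (y t))) / 2
        + 2 * (\<delta> * \<delta> * WW V w) + 8 * (\<delta> * (WW V w / M))"
      by (rule step[OF fin nn M \<delta>0 xy]) (simp add: p_def)
    have e1: "(\<lambda>u. x t u + \<delta> * p t u) = x (Suc t)" by (simp add: fun_eq_iff xs')
    have e2: "(\<lambda>u. y t u - \<delta> * (1 - p t u)) = y (Suc t)" by (simp add: fun_eq_iff ys)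
    have e3: "(\<lambda>u. if u \<in> Ob then y t u - \<delta> * (1 - p t u) else x t u + \<delta> * p t u) = z (Suc t)"
      by (simp add: fun_eq_iff z_def ys xs')
    have e4: "(\<lambda>u. if u \<in> Ob then y t u else x t u) = z t" by (simp add: fun_eq_iff z_def)
    show ?thesis unfolding \<Phi>_def E_def by (rule lin4[OF S[unfolded e1 e2 e3 e4]])
  qed
  have tele: "\<Phi> 0 - \<Phi> t \<le> real t * E" if "t \<le> T" for t
    using that
  proof (induction t)
    case 0 then show ?case by simp
  next
    case (Suc t)
    then have "\<Phi> 0 - \<Phi> t \<le> real t * E" by simp
    moreover have "\<Phi> t - \<Phi> (Suc t) \<le> E" using Suc.prems by (intro stepE) simp
    ultimately show ?case by (simp add: algebra_simps)
  qed
  have P0: "\<Phi> 0 = FF V w (\<lambda>u. of_bool (u \<in> Ob))"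
  proof -
    have "z 0 = (\<lambda>u. of_bool (u \<in> Ob))" by (simp add: fun_eq_iff z_def y_def x0)
    moreover have "x 0 = (\<lambda>u. 0)" by (simp add: fun_eq_iff x0)
    moreover have "y 0 = (\<lambda>u. 1)" by (simp add: fun_eq_iff y_def x0)
    ultimately show ?thesis by (simp add: \<Phi>_def FF_def)
  qed
  have PT: "\<Phi> T = 2 * FF V w (x T)"
  proof -
    have "y T = x T" using Tr by (simp add: fun_eq_iff y_def)
    moreover then have "z T = x T" by (simp add: fun_eq_iff z_def)
    ultimately show ?thesis by (simp add: \<Phi>_def)
  qed
  have TE: "real T * E = 2 * (WW V w / T) + 8 * (WW V w / M)"
    unfolding E_def \<delta>_def using Tr by (simp add: field_simps)
  show ?thesis using tele[of T] P0 PT TE by simp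
qed



definition nb :: "(nat \<Rightarrow> real) \<Rightarrow> (nat \<Rightarrow> real) \<Rightarrow> nat set" where
  "nb ow iw = {u. 0 < ow u \<or> 0 < iw u}"
definition afun :: "(nat \<Rightarrow> real) \<Rightarrow> (nat \<Rightarrow> real) \<Rightarrow> (nat \<Rightarrow> real) \<Rightarrow> real" where
  "afun ow iw X = (\<Sum>u\<in>nb ow iw. ow u * (1 - X u) - iw u * X u)"
definition bfun :: "(nat \<Rightarrow> real) \<Rightarrow> (nat \<Rightarrow> real) \<Rightarrow> (nat \<Rightarrow> real) \<Rightarrow> real \<Rightarrow> real" where
  "bfun ow iw X g = (\<Sum>u\<in>nb ow iw. iw u * (X u + g) - ow u * (1 - (X u + g)))"
definition kstep :: "nat \<Rightarrow> nat \<Rightarrow> (nat \<Rightarrow> real) \<Rightarrow> (nat \<Rightarrow> real) \<Rightarrow> (nat \<Rightarrow> real) \<Rightarrow> nat \<Rightarrow> nat" where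
  "kstep T M ow iw X t = qch M (afun ow iw X) (bfun ow iw X (1 - real t / real T))"

primrec XX :: "nat \<Rightarrow> nat \<Rightarrow> (nat \<Rightarrow> nat \<Rightarrow> real) \<Rightarrow> nat \<Rightarrow> nat \<Rightarrow> real" where
  "XX T M w 0 = (\<lambda>u. 0)"
| "XX T M w (Suc t) = (\<lambda>u. XX T M w t u + real (kstep T M (w u) (\<lambda>x. w x u) (XX T M w t) t) / (real T * real M))"

definition Kg :: "nat \<Rightarrow> nat \<Rightarrow> (nat \<Rightarrow> nat \<Rightarrow> real) \<Rightarrow> nat \<Rightarrow> nat \<Rightarrow> nat" where
  "Kg T M w s u = kstep T M (w u) (\<lambda>x. w x u) (XX T M w s) s"

definition nX :: "nat \<Rightarrow> nat \<Rightarrow> (nat \<Rightarrow> bool list) list \<Rightarrow> nat \<Rightarrow> nat \<Rightarrow> real" where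
  "nX T M h s = (\<lambda>u. (\<Sum>s'<s. real (length ((h ! s') u))) / (real T * real M))"

definition locK :: "nat \<Rightarrow> nat \<Rightarrow> local_input \<Rightarrow> (nat \<Rightarrow> bool list) list \<Rightarrow> nat \<Rightarrow> nat" where
  "locK T M li h s = kstep T M (fst (snd (snd li))) (fst (snd (snd (snd li)))) (nX T M h s) s"

definition alg :: "nat \<Rightarrow> nat \<Rightarrow> nat \<Rightarrow> congest_alg" where
  "alg T M m = \<lparr> rounds = T, rand_bits = (\<lambda>_. m),
     send = (\<lambda>(li, h) u. replicate (locK T M li h (length h)) True),
     decide = (\<lambda>(li, h). hv (snd (snd (snd (snd li)))) < (\<Sum>s<T. locK T M li h s)) \<rparr>"

lemma XX_sum: "XX T M w t u = (\<Sum>s<t. real (Kg T M w s u)) / (real T * real M)"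
  by (induction t) (simp_all add: Kg_def add_divide_distrib)

lemma kstep_cong:
  assumes "\<And>x. x \<in> nb ow iw \<Longrightarrow> X x = Y x"
  shows "kstep T M ow iw X t = kstep T M ow iw Y t"
proof -
  have "afun ow iw X = afun ow iw Y" unfolding afun_def by (rule sum.cong) (simp_all add: assms)
  moreover have "bfun ow iw X g = bfun ow iw Y g" for g unfolding bfun_def by (rule sum.cong) (simp_all add: assms)
  ultimately show ?thesis unfolding kstep_def by simp
qed

lemma nb_nbrs:
  assumes "wdigraph V w"
  shows "nb (w u) (\<lambda>x. w x u) = nbrs V w u"
proof -
  have w: "\<And>a b. w a b \<noteq> 0 \<Longrightarrow> a \<in> V \<and> b \<in> V" using assms unfolding wdigraph_def by blast
  have "x \<in> V" if "0 < w u x \<or> 0 < w x u" for x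
    using that w[of u x] w[of x u] by auto
  then show ?thesis unfolding nb_def nbrs_def by auto
qed

lemma hist_char:
  assumes wd: "wdigraph V w"
  shows "length (history (alg T M m) V w r t v) = t \<and>
    (\<forall>s<t. \<forall>u. (history (alg T M m) V w r t v ! s) u =
       (if u \<in> nbrs V w v then replicate (Kg T M w s u) True else []))"
proof (induction t arbitrary: v)
  case 0 then show ?case by simp
next
  case (Suc t)
  have L: "locK T M (local_input V w r u) (history (alg T M m) V w r t u) t = Kg T M w t u" for u
  proof -
    have "nX T M (history (alg T M m) V w r t u) t x = XX T M w t x" if x: "x \<in> nb (w u) (\<lambda>x. w x u)" for x
    proof -
      have xn: "x \<in> nbrs V w u" using x nb_nbrs[OF wd] by simp
      have "(\<Sum>s'<t. real (length ((history (alg T M m) V w r t u ! s') x))) = (\<Sum>s'<t. real (Kg T M w s' x))"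
        using Suc.IH[of u] xn by (intro sum.cong) auto
      then show ?thesis by (simp add: nX_def XX_sum)
    qed
    then show ?thesis unfolding locK_def Kg_def local_input_def
      by (simp add: kstep_cong[where X="nX T M _ t" and Y="XX T M w t"])
  qed
  show ?case
  proof
    show "length (history (alg T M m) V w r (Suc t) v) = Suc t" using Suc.IH[of v] by simp
    show "\<forall>s<Suc t. \<forall>u. (history (alg T M m) V w r (Suc t) v ! s) u =
       (if u \<in> nbrs V w v then replicate (Kg T M w s u) True else [])"
    proof (intro allI impI)
      fix s u assume s: "s < Suc t"
      show "(history (alg T M m) V w r (Suc t) v ! s) u = (if u \<in> nbrs V w v then replicate (Kg T M w s u) True else [])"
      proof (cases "s < t")
        case True then show ?thesis using Suc.IH[of v] by (simp add: nth_append)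
      next
        case False
        then have "s = t" using s by simp
        then show ?thesis using Suc.IH[of v] Suc.IH[of u] L[of u]
          by (simp add: nth_append alg_def)
      qed
    qed
  qed
qed


lemma locK_eq:
  assumes wd: "wdigraph V w" and st: "s \<le> t"
  shows "locK T M (local_input V w r u) (history (alg T M m) V w r t u) s = Kg T M w s u"
proof -
  have "nX T M (history (alg T M m) V w r t u) s x = XX T M w s x" if x: "x \<in> nb (w u) (\<lambda>x. w x u)" for x
  proof -
    have xn: "x \<in> nbrs V w u" using x nb_nbrs[OF wd] by simp
    have "(\<Sum>s'<s. real (length ((history (alg T M m) V w r t u ! s') x))) = (\<Sum>s'<s. real (Kg T M w s' x))"
      using hist_char[OF wd, of T M m r t u] xn st by (intro sum.cong) auto
    then show ?thesis by (simp add: nX_def XX_sum)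
  qed
  then show ?thesis unfolding locK_def Kg_def local_input_def
    by (simp add: kstep_cong[where X="nX T M _ s" and Y="XX T M w s"])
qed

lemma output_eq:
  assumes wd: "wdigraph V w"
  shows "output_cut (alg T M m) V w r = {v\<in>V. hv (r v) < (\<Sum>s<T. Kg T M w s v)}"
proof -
  have "decide (alg T M m) (node_view (alg T M m) V w r T v) = (hv (r v) < (\<Sum>s<T. Kg T M w s v))" for v
  proof -
    have "(\<Sum>s<T. locK T M (local_input V w r v) (history (alg T M m) V w r T v) s) = (\<Sum>s<T. Kg T M w s v)"
      using locK_eq[OF wd] by (intro sum.cong) auto
    then show ?thesis by (simp add: alg_def node_view_def local_input_def)
  qed
  moreover have "rounds (alg T M m) = T" by (simp add: alg_def)
  ultimately show ?thesis unfolding output_cut_def by simp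
qed

lemma nb_sub:
  assumes wd: "wdigraph V w"
  shows "nb (w u) (\<lambda>x. w x u) \<subseteq> V"
  using nb_nbrs[OF wd] unfolding nbrs_def by auto

lemma nb_zero:
  assumes wd: "wdigraph V w" and x: "x \<notin> nb (w u) (\<lambda>x. w x u)"
  shows "w u x = 0" "w x u = 0"
proof -
  have nn: "\<And>a b. 0 \<le> w a b" using wd unfolding wdigraph_def by blast
  have "\<not> 0 < w u x" "\<not> 0 < w x u" using x unfolding nb_def by auto
  then show "w u x = 0" "w x u = 0" using nn[of u x] nn[of x u] by linarith+
qed

lemma afun_DD:
  assumes wd: "wdigraph V w"
  shows "afun (w u) (\<lambda>x. w x u) X = DD V w X u"
proof -
  have fin: "finite V" using wd unfolding wdigraph_def by blast
  show ?thesis unfolding afun_def DD_def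
    proof (rule sum.mono_neutral_left[OF fin nb_sub[OF wd]], rule ballI)
    fix x assume "x \<in> V - nb (w u) (\<lambda>x. w x u)"
    then have "x \<notin> nb (w u) (\<lambda>x. w x u)" by simp
    from nb_zero[OF wd this] show "w u x * (1 - X x) - w x u * X x = 0" by simp
  qed
qed

lemma bfun_DD:
  assumes wd: "wdigraph V w"
  shows "bfun (w u) (\<lambda>x. w x u) X g = - DD V w (\<lambda>x. X x + g) u"
proof -
  have fin: "finite V" using wd unfolding wdigraph_def by blast
  have "bfun (w u) (\<lambda>x. w x u) X g = (\<Sum>x\<in>V. w x u * (X x + g) - w u x * (1 - (X x + g)))"
    unfolding bfun_def
    proof (rule sum.mono_neutral_left[OF fin nb_sub[OF wd]], rule ballI)
    fix x assume "x \<in> V - nb (w u) (\<lambda>x. w x u)"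
    then have "x \<notin> nb (w u) (\<lambda>x. w x u)" by simp
    from nb_zero[OF wd this] show "w x u * (X x + g) - w u x * (1 - (X x + g)) = 0" by simp
  qed
  also have "\<dots> = - DD V w (\<lambda>x. X x + g) u"
    unfolding DD_def by (simp add: sum_negf[symmetric])
  finally show ?thesis .
qed

lemma Kg_le: "Kg T M w s u \<le> M"
  unfolding Kg_def kstep_def by (rule qch_le)

lemma FF_ind:
  assumes "finite V" "S \<subseteq> V"
  shows "FF V w (\<lambda>u. of_bool (u \<in> S)) = dicut_weight V w S"
  unfolding dicut_as_sum[OF assms(2) assms(1)] FF_def by (intro sum.cong refl) simp

lemma expect_eq:
  assumes wd: "wdigraph V w" and T: "T > 0" and M: "M > 0" and TM: "T * M = 2 ^ m"
  shows "measure_pmf.expectation (random_bits_pmf (alg T M m) V) (\<lambda>r. dicut_weight V w (output_cut (alg T M m) V w r))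
     = FF V w (XX T M w T)"
proof -
  have fin: "finite V" and loop: "\<And>u. w u u = 0" using wd unfolding wdigraph_def by auto
  define J where "J v = (\<Sum>s<T. Kg T M w s v)" for v
  have Jle: "J v \<le> 2 ^ m" for v
  proof -
    have "J v \<le> (\<Sum>s<T. M)" unfolding J_def by (intro sum_mono Kg_le)
    then show ?thesis using TM by simp
  qed
  have pi: "measure (pmf_of_set {xs::bool list. length xs = m}) {xs. hv xs < J v} = XX T M w T v" for v
    using meas_hv[OF Jle[of v]] TM unfolding XX_sum J_def
    by (simp flip: of_nat_mult add: of_nat_sum)
  have "measure_pmf.expectation (random_bits_pmf (alg T M m) V) (\<lambda>r. dicut_weight V w (output_cut (alg T M m) V w r))
     = measure_pmf.expectation (Pi_pmf V [] (\<lambda>_. pmf_of_set {xs::bool list. length xs = m})) (\<lambda>r. dicut_weight V w {v\<in>V. hv (r v) < J v})"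
    unfolding random_bits_pmf_def output_eq[OF wd] J_def by (simp add: alg_def)
  also have "\<dots> = (\<Sum>u\<in>V. \<Sum>v\<in>V. w u v * measure (pmf_of_set {xs::bool list. length xs = m}) {x. hv x < J u}
       * (1 - measure (pmf_of_set {xs::bool list. length xs = m}) {x. hv x < J v}))"
    by (rule exp_dicut[OF fin loop])
  also have "\<dots> = FF V w (XX T M w T)" unfolding FF_def pi by simp
  finally show ?thesis .
qed


lemma lin5: "(Oo::real) - F2 \<le> 2 * a + b8 \<Longrightarrow> b8 = 2 * a \<Longrightarrow> a \<le> 4 * c \<Longrightarrow> Oo - F2 \<le> 16 * c"
  by linarith

lemma alg_bound:
  assumes wd: "wdigraph V w" and T: "T > 0" and M: "M = 4 * T" and TM: "T * M = 2 ^ m"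
  shows "measure_pmf.expectation (random_bits_pmf (alg T M m) V) (\<lambda>r. dicut_weight V w (output_cut (alg T M m) V w r))
     \<ge> max_dicut V w / 2 - 8 * (max_dicut V w / T)"
proof -
  have fin: "finite V" and nn: "\<And>u v. 0 \<le> w u v" and loop: "\<And>u. w u u = 0"
    using wd unfolding wdigraph_def by auto
  have M0: "M > 0" using M T by simp
  obtain Ob where Ob: "Ob \<subseteq> V" "max_dicut V w = dicut_weight V w Ob" using max_attained[OF fin] by blast
  have P: "FF V w (\<lambda>u. of_bool (u \<in> Ob)) - 2 * FF V w (XX T M w T) \<le> 2 * (WW V w / T) + 8 * (WW V w / M)"
  proof (rule process[where x="XX T M w" and Ob=Ob and V=V and w=w and T=T and M=M, OF fin nn T M0])
    show "\<And>u. XX T M w 0 u = 0" by simp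
    show "\<And>t u. XX T M w (Suc t) u = XX T M w t u + real (qch M (DD V w (XX T M w t) u) (- DD V w (\<lambda>u. XX T M w t u + (1 - real t / real T)) u)) / (real T * real M)"
      by (simp add: kstep_def afun_DD[OF wd] bfun_DD[OF wd])
  qed
  have opt: "FF V w (\<lambda>u. of_bool (u \<in> Ob)) = max_dicut V w" using FF_ind[OF fin Ob(1)] Ob(2) by simp
  have W: "WW V w \<le> 4 * max_dicut V w" using W_le[where V=V and w=w, OF fin loop] unfolding WW_def by simp
  have Tr: "real T > 0" using T by simp
  have MT: "8 * (WW V w / M) = 2 * (WW V w / T)" using M Tr by (simp add: field_simps)
  have "WW V w / T \<le> (4 * max_dicut V w) / T" using W Tr by (simp add: divide_right_mono)
  then have Wt: "WW V w / T \<le> 4 * (max_dicut V w / T)" by simp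
  have "max_dicut V w - 2 * FF V w (XX T M w T) \<le> 16 * (max_dicut V w / T)"
    using lin5[OF P[unfolded opt] MT Wt] .
  then show ?thesis using expect_eq[OF wd T M0 TM] by simp
qed

definition triv :: congest_alg where
  "triv = \<lparr> rounds = 0, rand_bits = (\<lambda>_. 0), send = (\<lambda>_ _. []), decide = (\<lambda>_. False) \<rparr>"

lemma exists_pow:
  fixes \<epsilon> :: real
  assumes "0 < \<epsilon>" "\<epsilon> < 1/2"
  obtains a :: nat where "8 / \<epsilon> \<le> 2 ^ a" "2 ^ a \<le> 16 / \<epsilon>"
proof -
  obtain n :: nat where n: "8 / \<epsilon> < 2 ^ n" using real_arch_pow[of 2 "8 / \<epsilon>"] by auto
  define a where "a = (LEAST n::nat. 8 / \<epsilon> \<le> 2 ^ n)"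
  have a1: "8 / \<epsilon> \<le> 2 ^ a" unfolding a_def by (rule LeastI[of _ n]) (use n in simp)
  have big: "8 / \<epsilon> > 16" using assms by (simp add: field_simps)
  have "a \<noteq> 0" proof
    assume "a = 0" then show False using a1 big by simp
  qed
  then obtain b where b: "a = Suc b" by (cases a) auto
  have "\<not> 8 / \<epsilon> \<le> 2 ^ b" unfolding a_def
    using not_less_Least[of b "\<lambda>n. 8 / \<epsilon> \<le> (2::real) ^ n"] b a_def by simp
  then have "2 ^ a \<le> 16 / \<epsilon>" using b by simp
  then show ?thesis using that a1 by blast
qed


lemma locK_le: "locK T M li h s \<le> M"
  unfolding locK_def kstep_def by (rule qch_le)

lemma msg_ge: "M \<le> msg_bound M n"
  unfolding msg_bound_def by simp

lemma lin6:
  fixes x e Oo Ee :: real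
  assumes "x \<le> e * Oo" "Oo / 2 - x \<le> Ee"
  shows "(1/2 - e) * Oo \<le> Ee"
proof -
  have "(1/2 - e) * Oo = Oo / 2 - e * Oo" by (simp add: algebra_simps)
  then show ?thesis using assms by linarith
qed

lemma main_fixed:
  fixes \<epsilon> :: real and k :: nat
  assumes \<epsilon>: "\<epsilon> > 0"
  shows "\<exists>(A::congest_alg) (c::nat).
     real (rounds A) \<le> 16 / \<epsilon> \<and> respects_bandwidth k A c \<and>
     (\<forall>V w. admissible k V w \<longrightarrow>
        measure_pmf.expectation (random_bits_pmf A V) (\<lambda>r. dicut_weight V w (output_cut A V w r))
          \<ge> (1/2 - \<epsilon>) * max_dicut V w)"
proof (cases "\<epsilon> \<ge> 1/2")
  case True
  have r: "real (rounds triv) \<le> 16 / \<epsilon>" using \<epsilon> by (simp add: triv_def)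
  have b: "respects_bandwidth k triv 0" unfolding respects_bandwidth_def by (simp add: triv_def)
  have e: "measure_pmf.expectation (random_bits_pmf triv V) (\<lambda>r. dicut_weight V w (output_cut triv V w r))
          \<ge> (1/2 - \<epsilon>) * max_dicut V w" if adm: "admissible k V w" for V w
  proof -
    have fin: "finite V" and nn: "\<And>u v. 0 \<le> w u v" using adm unfolding admissible_def wdigraph_def by auto
    have "output_cut triv V w r = {}" for r by (simp add: output_cut_def triv_def)
    then have "measure_pmf.expectation (random_bits_pmf triv V) (\<lambda>r. dicut_weight V w (output_cut triv V w r)) = 0"
      by (simp add: dicut_weight_def)
    moreover have "(1/2 - \<epsilon>) * max_dicut V w \<le> 0"
      using True max_nonneg[OF fin nn] by (simp add: mult_nonpos_nonneg)
    ultimately show ?thesis by simp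
  qed
  show ?thesis using r b e by blast
next
  case False
  then have "\<epsilon> < 1/2" by simp
  then obtain a :: nat where a1: "8 / \<epsilon> \<le> 2 ^ a" and a2: "2 ^ a \<le> 16 / \<epsilon>" using exists_pow[OF \<epsilon>] by blast
  define T :: nat where "T = 2 ^ a"
  define M :: nat where "M = 4 * T"
  define m :: nat where "m = 2 * a + 2"
  have T0: "T > 0" by (simp add: T_def)
  have TM: "T * M = 2 ^ m" unfolding T_def M_def m_def by (simp add: power_add power_mult mult_2 mult_ac power2_eq_square)
  have Tr: "real T = 2 ^ a" by (simp add: T_def)
  have r: "real (rounds (alg T M m)) \<le> 16 / \<epsilon>" using a2 Tr by (simp add: alg_def)
  have b: "respects_bandwidth k (alg T M m) M"
    unfolding respects_bandwidth_def
  proof (intro allI impI)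
    fix V w r t v u n
    show "length (send (alg T M m) (node_view (alg T M m) V w r t v) u) \<le> msg_bound M (card V)"
      using le_trans[OF locK_le msg_ge] by (simp add: alg_def node_view_def)
  qed
  have e: "measure_pmf.expectation (random_bits_pmf (alg T M m) V) (\<lambda>r. dicut_weight V w (output_cut (alg T M m) V w r))
          \<ge> (1/2 - \<epsilon>) * max_dicut V w" if adm: "admissible k V w" for V w
  proof -
    have wd: "wdigraph V w" using adm unfolding admissible_def by simp
    have fin: "finite V" and nn: "\<And>u v. 0 \<le> w u v" using wd unfolding wdigraph_def by auto
    have opt: "0 \<le> max_dicut V w" by (rule max_nonneg[OF fin nn])
    have "8 \<le> \<epsilon> * real T" using a1 \<epsilon> Tr by (simp add: divide_le_eq mult.commute)
    then have "8 / real T \<le> \<epsilon>" using T0 by (simp add: divide_le_eq mult.commute)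
    then have "8 / real T * max_dicut V w \<le> \<epsilon> * max_dicut V w" using opt by (rule mult_right_mono)
    then have "8 * (max_dicut V w / T) \<le> \<epsilon> * max_dicut V w" by simp
    moreover have "measure_pmf.expectation (random_bits_pmf (alg T M m) V) (\<lambda>r. dicut_weight V w (output_cut (alg T M m) V w r))
     \<ge> max_dicut V w / 2 - 8 * (max_dicut V w / T)"
      by (rule alg_bound[OF wd T0 M_def TM])
    ultimately show ?thesis by (rule lin6)
  qed
  show ?thesis using r b e by blast
qed

theorem mainTheorem11:
  shows "\<exists>C::real. \<forall>\<epsilon>::real. \<epsilon> > 0 \<longrightarrow> (\<forall>k::nat. \<exists>(A::congest_alg) (c::nat).
     real (rounds A) \<le> C / \<epsilon> \<and> respects_bandwidth k A c \<and>
     (\<forall>V w. admissible k V w \<longrightarrow>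
        measure_pmf.expectation (random_bits_pmf A V) (\<lambda>r. dicut_weight V w (output_cut A V w r))
          \<ge> (1/2 - \<epsilon>) * max_dicut V w))"

  using main_fixed by blast


end
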